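(* For $n\ge3$: $\mathrm{St}(\mathfrak a_0(n))=\{I,X\}^{\otimes n}\cup\{Y,Z\}^{\otimes n}$; $\mathrm{St}(\mathfrak a_2(n))=\{P_I,P_{XY},P_{YX},P_Z\}$; $\mathrm{St}(\mathfrak a_3(n))=\mathrm{St}(\mathfrak a_6(n))=\{P_I,P_X,P_{YZ},P_{ZY}\}$; $\mathrm{St}(\mathfrak a_4(n))=\mathrm{St}(\mathfrak a_7(n))=\{P_I,P_X,P_Y,P_Z\}$; $\mathrm{St}(\mathfrak a_5(n))=\mathrm{St}(\mathfrak a_{10}(n))=\{P_I,P_{XYZ},P_{YZX},P_{ZXY}\}$; $\mathrm{St}(\mathfrak a_8(n))=\{P_I,P_Y,X_1,ZY\cdots Y\}$ (the last being $Z$ followed by $n-1$ copies of $Y$); $\mathrm{St}(\mathfrak a_9(n))=\{P_I,X_1,Y_1X_2,Z_1X_2\}$; $\mathrm{St}(\mathfrak a_{13}(n))=\mathrm{St}(\mathfrak a_{20}(n))=\{P_I,P_X\}$; $\mathrm{St}(\mathfrak a_{14}(n))=\{P_I,P_Z\}$; $\mathrm{St}(\mathfrak a_{15}(n))=\mathrm{St}(\mathfrak b_2(n))=\mathrm{St}(\mathfrak b_4(n))=\{P_I,X_1\}$; $\mathrm{St}(\mathfrak b_0(n))=\mathrm{St}(\mathfrak b_1(n))=\{I,X\}^{\otimes n}$; $\mathrm{St}(\mathfrak a_k(n))=\mathrm{St}(\mathfrak b_3(n))=\{P_I\}$ for $k\in\{11,12,16,17,18,19,21,22\}$.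
   Context: Pauli matrices $I,X,Y,Z$; $\mathcal P_n$ is the set of length-$n$ Pauli strings $A^1\otimes\cdots\otimes A^n$, $A^j\in\{I,X,Y,Z\}$. $A_j$ denotes $A$ at position $j$ and $I$ elsewhere; $A_iB_j$ the string with $A$ at $i$, $B$ at $j$, $I$ elsewhere. For a word $w$ over $\{I,X,Y,Z\}$, $P_w\in\mathcal P_n$ is the periodic repetition $www\cdots$ truncated to length $n$ (e.g. $P_I=I^{\otimes n}$, $P_X=X^{\otimes n}$, $P_{YZ}=YZYZ\cdots$). The stabilizer $\mathrm{St}(\mathfrak s)$ of a set $\mathfrak s$ of matrices is the set of all $P\in\mathcal P_n$ commuting with every element of $\mathfrak s$. For a set $S$ of Pauli strings, $\mathrm{Lie}\langle S\rangle$ is the smallest real Lie subalgebra of $\mathfrak u(2^n)$ containing $\{iP:P\in S\}$; for a set $G$ of two-qubit strings, $G(n)=\mathrm{Lie}\langle A_jB_{j+1}: AB\in G,1\le j\le n-1\rangle$. Generating sets: $\mathfrak a_0=\{XX\}$, $\mathfrak a_2=\{XY,YX\}$, $\mathfrak a_3=\{XX,YZ\}$, $\mathfrak a_4=\{XX,YY\}$, $\mathfrak a_5=\{XY,YZ\}$, $\mathfrak a_6=\{XX,YZ,ZY\}$, $\mathfrak a_7=\{XX,YY,ZZ\}$, $\mathfrak a_8=\{XX,XZ\}$, $\mathfrak a_9=\{XY,XZ\}$, $\mathfrak a_{10}=\{XY,YZ,ZX\}$, $\mathfrak a_{11}=\{XY,YX,YZ\}$, $\mathfrak a_{12}=\{XX,XY,YZ\}$,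 $\mathfrak a_{13}=\{XX,YY,YZ\}$, $\mathfrak a_{14}=\{XX,YY,XY\}$, $\mathfrak a_{15}=\{XX,XY,XZ\}$, $\mathfrak a_{16}=\{XY,YX,YZ,ZY\}$, $\mathfrak a_{17}=\{XX,XY,ZX\}$, $\mathfrak a_{18}=\{XX,XZ,YY,ZY\}$, $\mathfrak a_{19}=\{XX,XY,ZX,YZ\}$, $\mathfrak a_{20}=\{XX,YY,ZZ,ZY\}$, $\mathfrak a_{21}=\{XX,YY,XY,ZX\}$, $\mathfrak a_{22}=\{XX,XY,XZ,YX\}$, $\mathfrak b_0=\{XI,IX\}$, $\mathfrak b_1=\{XX,XI,IX\}$, $\mathfrak b_2=\{XY,XI,IX\}$, $\mathfrak b_3=\{XI,YI,IX,IY\}$, $\mathfrak b_4=\{XX,XY,XI,IX\}$. *)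

theory Defs
  imports Complex_Main "Jordan_Normal_Form.Matrix"
begin

datatype pauli = PI | PX | PY | PZ

fun pauli_entry :: "pauli \<Rightarrow> nat \<Rightarrow> nat \<Rightarrow> complex" where
  "pauli_entry PI r c = (if r = c then 1 else 0)"
| "pauli_entry PX r c = (if r \<noteq> c then 1 else 0)"
| "pauli_entry PY r c = (if r = c then 0 else if r = 0 then - \<i> else \<i>)"
| "pauli_entry PZ r c = (if r \<noteq> c then 0 else if r = 0 then 1 else -1)"

text \<open>A Pauli string of length n is a list of length n; its matrix is the
  Kronecker product A^1 \<otimes> ... \<otimes> A^n, a 2^n x 2^n complex matrix, where
  position j (0-based) corresponds to the binary digit of weight 2^(n-1-j).\<close>
definition bitj :: "nat \<Rightarrow> nat \<Rightarrow> nat \<Rightarrow> nat" where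
  "bitj n j r = (r div 2 ^ (n - 1 - j)) mod 2"

definition pmat :: "pauli list \<Rightarrow> complex mat" where
  "pmat w = (let n = length w in
     mat (2 ^ n) (2 ^ n)
       (\<lambda>(r, c). \<Prod>j<n. pauli_entry (w ! j) (bitj n j r) (bitj n j c)))"

definition pauli_strings :: "nat \<Rightarrow> pauli list set" where
  "pauli_strings n = {w. length w = n}"

inductive_set lie_closure :: "nat \<Rightarrow> complex mat set \<Rightarrow> complex mat set"
  for d :: nat and S :: "complex mat set" where
  zero: "0\<^sub>m d d \<in> lie_closure d S"
| gen: "M \<in> S \<Longrightarrow> M \<in> lie_closure d S"
| add: "A \<in> lie_closure d S \<Longrightarrow> B \<in> lie_closure d S \<Longrightarrow> A + B \<in> lie_closure d S"
| smult: "A \<in> lie_closure d S \<Longrightarrow> (complex_of_real r) \<cdot>\<^sub>m A \<in> lie_closure d S"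
| bracket: "A \<in> lie_closure d S \<Longrightarrow> B \<in> lie_closure d S \<Longrightarrow> A * B - B * A \<in> lie_closure d S"

definition Lie :: "nat \<Rightarrow> pauli list set \<Rightarrow> complex mat set" where
  "Lie n S = lie_closure (2 ^ n) ((\<lambda>P. \<i> \<cdot>\<^sub>m pmat P) ` S)"

definition two_local :: "nat \<Rightarrow> pauli \<Rightarrow> pauli \<Rightarrow> nat \<Rightarrow> pauli list" where
  "two_local n A B j = map (\<lambda>k. if k = j then A else if k = Suc j then B else PI) [0..<n]"

text \<open>G(n) for a set G of two-qubit strings (given as pairs (A,B) for AB).\<close>
definition lieG :: "(pauli \<times> pauli) set \<Rightarrow> nat \<Rightarrow> complex mat set" where
  "lieG G n = Lie n {two_local n A B j | A B j. (A, B) \<in> G \<and> Suc j < n}"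

definition St :: "nat \<Rightarrow> complex mat set \<Rightarrow> pauli list set" where
  "St n s = {P \<in> pauli_strings n. \<forall>M \<in> s. pmat P * M = M * pmat P}"

definition per :: "pauli list \<Rightarrow> nat \<Rightarrow> pauli list" where
  "per w n = map (\<lambda>k. w ! (k mod length w)) [0..<n]"

definition tens_set :: "pauli set \<Rightarrow> nat \<Rightarrow> pauli list set" where
  "tens_set A n = {w. length w = n \<and> set w \<subseteq> A}"

definition "a0 = {(PX,PX)}"
definition "a2 = {(PX,PY),(PY,PX)}"
definition "a3 = {(PX,PX),(PY,PZ)}"
definition "a4 = {(PX,PX),(PY,PY)}"
definition "a5 = {(PX,PY),(PY,PZ)}"
definition "a6 = {(PX,PX),(PY,PZ),(PZ,PY)}"
definition "a7 = {(PX,PX),(PY,PY),(PZ,PZ)}"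
definition "a8 = {(PX,PX),(PX,PZ)}"
definition "a9 = {(PX,PY),(PX,PZ)}"
definition "a10 = {(PX,PY),(PY,PZ),(PZ,PX)}"
definition "a11 = {(PX,PY),(PY,PX),(PY,PZ)}"
definition "a12 = {(PX,PX),(PX,PY),(PY,PZ)}"
definition "a13 = {(PX,PX),(PY,PY),(PY,PZ)}"
definition "a14 = {(PX,PX),(PY,PY),(PX,PY)}"
definition "a15 = {(PX,PX),(PX,PY),(PX,PZ)}"
definition "a16 = {(PX,PY),(PY,PX),(PY,PZ),(PZ,PY)}"
definition "a17 = {(PX,PX),(PX,PY),(PZ,PX)}"
definition "a18 = {(PX,PX),(PX,PZ),(PY,PY),(PZ,PY)}"
definition "a19 = {(PX,PX),(PX,PY),(PZ,PX),(PY,PZ)}"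
definition "a20 = {(PX,PX),(PY,PY),(PZ,PZ),(PZ,PY)}"
definition "a21 = {(PX,PX),(PY,PY),(PX,PY),(PZ,PX)}"
definition "a22 = {(PX,PX),(PX,PY),(PX,PZ),(PY,PX)}"
definition "b0 = {(PX,PI),(PI,PX)}"
definition "b1 = {(PX,PX),(PX,PI),(PI,PX)}"
definition "b2 = {(PX,PY),(PX,PI),(PI,PX)}"
definition "b3 = {(PX,PI),(PY,PI),(PI,PX),(PI,PY)}"
definition "b4 = {(PX,PX),(PX,PY),(PX,PI),(PI,PX)}"

end

theory Submission
  imports Defs
begin


lemma aux_mod: "e < (m::nat) \<Longrightarrow> ((r::nat) mod 2^m) div 2^e mod 2 = r div 2^e mod 2"
proof -
  assume em: "e < m"
  define q where "q = r div 2^m"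
  define s where "s = r mod 2^m"
  have pm: "(2::nat)^m = 2^e * 2^(m-e)" using em by (simp add: power_add[symmetric])
  have r: "r = s + 2^e * (q * 2^(m-e))" unfolding q_def s_def by (metis pm mult.assoc mult.commute mod_mult_div_eq add.commute)
  have "r div 2^e = s div 2^e + q * 2^(m-e)"
    by (subst r) simp
  moreover have "even (q * 2^(m-e))" using em by simp
  then have "(q * 2^(m-e)) mod 2 = 0" by simp
  ultimately show ?thesis unfolding s_def by (simp add: mod_add_eq[symmetric])
qed

lemma bit_mod: "j < m \<Longrightarrow> bitj m j (r mod 2 ^ m) = bitj m j r"
  unfolding bitj_def by (rule aux_mod) simp

definition ent :: "pauli list \<Rightarrow> nat \<Rightarrow> nat \<Rightarrow> complex" where
  "ent w r c = (\<Prod>j<length w. pauli_entry (w ! j) (bitj (length w) j r) (bitj (length w) j c))"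

lemma bitj_0: "r < 2 * 2^m \<Longrightarrow> bitj (Suc m) 0 r = r div 2^m"
  by (simp add: bitj_def less_mult_imp_div_less)

lemma bitj_Suc: "j < m \<Longrightarrow> bitj (Suc m) (Suc j) r = bitj m j (r mod 2^m)"
  by (simp add: bit_mod) (simp add: bitj_def)

lemma ent_Cons: "r < 2 * 2^length w \<Longrightarrow> c < 2 * 2^length w \<Longrightarrow>
  ent (a # w) r c = pauli_entry a (r div 2^length w) (c div 2^length w) * ent w (r mod 2^length w) (c mod 2^length w)"
  unfolding ent_def length_Cons
  apply (subst prod.lessThan_Suc_shift)
  apply (simp add: bitj_0 bitj_Suc del: prod.lessThan_Suc)
  done

lemma sum_double: "(\<Sum>k<2*(N::nat). f k) = (\<Sum>k<N. f k) + (\<Sum>k<N. f (N + k)::complex)"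
proof -
  have "(\<Sum>k<2*N. f k) = (\<Sum>k<N+N. f k)" by (simp add: mult_2)
  also have "\<dots> = (\<Sum>k<N. f k) + (\<Sum>k<N. f (N + k))"
    by (simp add: sum.lessThan_Suc_shift lessThan_atLeast0 sum.atLeastLessThan_concat[symmetric]
        sum.shift_bounds_nat_ivl[symmetric] add.commute)
  finally show ?thesis .
qed

definition MM :: "pauli list \<Rightarrow> pauli list \<Rightarrow> nat \<Rightarrow> nat \<Rightarrow> complex" where
  "MM w v r c = (\<Sum>k<2^length w. ent w r k * ent v k c)"

definition pm2 :: "pauli \<Rightarrow> pauli \<Rightarrow> nat \<Rightarrow> nat \<Rightarrow> complex" where
  "pm2 a b r c = (\<Sum>k<2. pauli_entry a r k * pauli_entry b k c)"

lemma ent_lo1: "k < 2^length w \<Longrightarrow> r < 2 * 2^length w \<Longrightarrow>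
  ent (a#w) r k = pauli_entry a (r div 2^length w) 0 * ent w (r mod 2^length w) k"
  using ent_Cons[of r w k a] by simp

lemma ent_lo2: "k < 2^length w \<Longrightarrow> c < 2 * 2^length w \<Longrightarrow>
  ent (a#w) k c = pauli_entry a 0 (c div 2^length w) * ent w k (c mod 2^length w)"
  using ent_Cons[of k w c a] by simp

lemma ent_hi1: "k < 2^length w \<Longrightarrow> r < 2 * 2^length w \<Longrightarrow>
  ent (a#w) r (2^length w + k) = pauli_entry a (r div 2^length w) 1 * ent w (r mod 2^length w) k"
  using ent_Cons[of r w "2^length w + k" a] by simp

lemma ent_hi2: "k < 2^length w \<Longrightarrow> c < 2 * 2^length w \<Longrightarrow>
  ent (a#w) (2^length w + k) c = pauli_entry a 1 (c div 2^length w) * ent w k (c mod 2^length w)"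
  using ent_Cons[of "2^length w + k" w c a] by simp

lemma MM_Cons:
  assumes l: "length v = length w" and r: "r < 2 * 2^length w" and c: "c < 2 * 2^length w"
  shows "MM (a#w) (b#v) r c = pm2 a b (r div 2^length w) (c div 2^length w) * MM w v (r mod 2^length w) (c mod 2^length w)"
proof -
  let ?N = "2^length w :: nat"
  have "MM (a#w) (b#v) r c = (\<Sum>k<2*?N. ent (a#w) r k * ent (b#v) k c)"
    by (simp add: MM_def)
  also have "\<dots> = (\<Sum>k<?N. ent (a#w) r k * ent (b#v) k c) + (\<Sum>k<?N. ent (a#w) r (?N+k) * ent (b#v) (?N+k) c)"
    by (rule sum_double)
  also have "(\<Sum>k<?N. ent (a#w) r k * ent (b#v) k c) = (\<Sum>k<?N. pauli_entry a (r div ?N) 0 * pauli_entry b 0 (c div ?N) * (ent w (r mod ?N) k * ent v k (c mod ?N)))"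
    by (rule sum.cong) (use l r c in \<open>simp_all add: ent_lo1 ent_lo2[of _ v, unfolded l] ent_hi1 ent_hi2[of _ v, unfolded l]\<close>)
  also have "(\<Sum>k<?N. ent (a#w) r (?N+k) * ent (b#v) (?N+k) c) = (\<Sum>k<?N. pauli_entry a (r div ?N) 1 * pauli_entry b 1 (c div ?N) * (ent w (r mod ?N) k * ent v k (c mod ?N)))"
    by (rule sum.cong) (use l r c in \<open>simp_all add: ent_lo1 ent_lo2[of _ v, unfolded l] ent_hi1 ent_hi2[of _ v, unfolded l]\<close>)
  also have "(\<Sum>k<?N. pauli_entry a (r div ?N) 0 * pauli_entry b 0 (c div ?N) * (ent w (r mod ?N) k * ent v k (c mod ?N)))
      = pauli_entry a (r div ?N) 0 * pauli_entry b 0 (c div ?N) * MM w v (r mod ?N) (c mod ?N)"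
    by (simp only: MM_def sum_distrib_left)
  also have "(\<Sum>k<?N. pauli_entry a (r div ?N) 1 * pauli_entry b 1 (c div ?N) * (ent w (r mod ?N) k * ent v k (c mod ?N)))
      = pauli_entry a (r div ?N) 1 * pauli_entry b 1 (c div ?N) * MM w v (r mod ?N) (c mod ?N)"
    by (simp only: MM_def sum_distrib_left)
  also have "pm2 a b (r div ?N) (c div ?N) = pauli_entry a (r div ?N) 0 * pauli_entry b 0 (c div ?N) + pauli_entry a (r div ?N) 1 * pauli_entry b 1 (c div ?N)"
    by (simp add: pm2_def numeral_2_eq_2)
  ultimately show ?thesis
    by (simp only: distrib_right)
qed

definition anti :: "pauli \<Rightarrow> pauli \<Rightarrow> bool" where
  "anti a b = (a \<noteq> PI \<and> b \<noteq> PI \<and> a \<noteq> b)"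

definition sg :: "pauli \<Rightarrow> pauli \<Rightarrow> complex" where
  "sg a b = (if anti a b then -1 else 1)"

lemma lt2: "(r::nat) < 2 \<Longrightarrow> r = 0 \<or> r = 1" by auto

lemma pm2_expand: "pm2 a b r c = pauli_entry a r 0 * pauli_entry b 0 c + pauli_entry a r 1 * pauli_entry b 1 c"
  by (simp add: pm2_def numeral_2_eq_2)

lemma pm2_sign: "r < 2 \<Longrightarrow> c < 2 \<Longrightarrow> pm2 a b r c = sg a b * pm2 b a r c"
  apply (drule lt2, drule lt2)
  apply (elim disjE; cases a; cases b)
  apply (simp_all add: pm2_expand sg_def anti_def)
  done

lemma pm2_nz: "pm2 a b 0 0 \<noteq> 0 \<or> pm2 a b 0 1 \<noteq> 0"
  by (cases a; cases b; simp add: pm2_expand)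

lemma MM_sign: "length v = length w \<Longrightarrow> r < 2^length w \<Longrightarrow> c < 2^length w \<Longrightarrow>
   MM w v r c = (\<Prod>j<length w. sg (w!j) (v!j)) * MM v w r c"
proof (induction w arbitrary: v r c)
  case Nil
  then show ?case by (simp add: MM_def)
next
  case (Cons a w)
  then obtain b v' where v: "v = b # v'" and l: "length v' = length w" by (cases v) auto
  let ?N = "2^length w :: nat"
  have rc: "r < 2 * ?N" "c < 2 * ?N" using Cons.prems by simp_all
  have r: "r div ?N < 2" "c div ?N < 2" using rc by (auto simp: less_mult_imp_div_less)
  have rm: "r mod ?N < ?N" "c mod ?N < ?N" by simp_all
  have e1: "MM (a#w) (b#v') r c = pm2 a b (r div ?N) (c div ?N) * MM w v' (r mod ?N) (c mod ?N)"
    using MM_Cons[OF l rc] .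
  have e2: "MM (b#v') (a#w) r c = pm2 b a (r div ?N) (c div ?N) * MM v' w (r mod ?N) (c mod ?N)"
    using MM_Cons[of w v' r c b a] l rc by simp
  have e3: "pm2 a b (r div ?N) (c div ?N) = sg a b * pm2 b a (r div ?N) (c div ?N)"
    using pm2_sign[OF r] .
  have e4: "MM w v' (r mod ?N) (c mod ?N) = (\<Prod>j<length w. sg (w!j) (v'!j)) * MM v' w (r mod ?N) (c mod ?N)"
    using Cons.IH[OF l rm] .
  have e5: "(\<Prod>j<length (a#w). sg ((a#w)!j) ((b#v')!j)) = sg a b * (\<Prod>j<length w. sg (w!j) (v'!j))"
    by (simp only: length_Cons prod.lessThan_Suc_shift nth_Cons_0 nth_Cons_Suc)
  show ?case unfolding v e1 e2 e3 e4 e5 by (simp only: mult_ac)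
qed

lemma MM_nz: "length v = length w \<Longrightarrow> \<exists>c<2^length w. MM w v 0 c \<noteq> 0"
proof (induction w arbitrary: v)
  case Nil
  then show ?case by (simp add: MM_def ent_def)
next
  case (Cons a w)
  then obtain b v' where v: "v = b # v'" and l: "length v' = length w" by (cases v) auto
  let ?N = "2^length w :: nat"
  obtain c0 where c0: "c0 < ?N" "MM w v' 0 c0 \<noteq> 0" using Cons.IH[OF l] by auto
  obtain c1 where c1: "c1 < 2" "pm2 a b 0 c1 \<noteq> 0" 
  proof -
    from pm2_nz[of a b] show ?thesis
    proof
      assume "pm2 a b 0 0 \<noteq> 0" then show ?thesis by (intro that[of 0]) simp_all
    next
      assume "pm2 a b 0 1 \<noteq> 0" then show ?thesis by (intro that[of 1]) simp_all
    qed
  qed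
  define c where "c = c1 * ?N + c0"
  have cd: "c div ?N = c1" "c mod ?N = c0" using c0 by (simp_all add: c_def)
  have cl: "c < 2 * ?N"
  proof -
    have "c < c1 * ?N + ?N" using c0 by (simp add: c_def)
    also have "\<dots> \<le> 2 * ?N"
    proof -
      have "c1 \<le> 1" using c1 by simp
      then have "c1 * ?N \<le> 1 * ?N" by (rule mult_le_mono1)
      then show ?thesis by simp
    qed
    finally show ?thesis .
  qed
  have "MM (a#w) v 0 c = pm2 a b 0 c1 * MM w v' 0 c0"
    using MM_Cons[OF l, of 0 c a b] cl cd unfolding v by simp
  then show ?case using c0 c1 cl by (intro exI[of _ c]) simp
qed

lemma pmat_carrier: "pmat P \<in> carrier_mat (2^length P) (2^length P)"
  by (simp add: pmat_def Let_def)

lemma pmat_index: "r < 2^length P \<Longrightarrow> c < 2^length P \<Longrightarrow> pmat P $$ (r,c) = ent P r c"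
  by (simp add: pmat_def Let_def ent_def)

lemma pmat_mult_index: "length Q = length P \<Longrightarrow> r < 2^length P \<Longrightarrow> c < 2^length P \<Longrightarrow>
   (pmat P * pmat Q) $$ (r,c) = MM P Q r c"
  by (simp add: index_mult_mat pmat_carrier[unfolded carrier_mat_def] scalar_prod_def MM_def
      pmat_index lessThan_atLeast0 row_def col_def)
    (simp add: pmat_def Let_def scalar_prod_def ent_def)

lemma comm_iff: assumes l: "length Q = length P"
  shows "(pmat P * pmat Q = pmat Q * pmat P) \<longleftrightarrow> (\<Prod>j<length P. sg (P!j) (Q!j)) = 1"
proof
  assume eq: "pmat P * pmat Q = pmat Q * pmat P"
  obtain c where c: "c < 2^length P" "MM Q P 0 c \<noteq> 0" using MM_nz[of P Q] l by auto
  have "MM P Q 0 c = MM Q P 0 c"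
    using arg_cong[OF eq, of "\<lambda>M. M $$ (0,c)"] c l by (simp add: pmat_mult_index)
  moreover have "MM P Q 0 c = (\<Prod>j<length P. sg (P!j) (Q!j)) * MM Q P 0 c"
    using MM_sign[of Q P 0 c] l c by simp
  ultimately show "(\<Prod>j<length P. sg (P!j) (Q!j)) = 1" using c by simp
next
  assume s: "(\<Prod>j<length P. sg (P!j) (Q!j)) = 1"
  show "pmat P * pmat Q = pmat Q * pmat P"
  proof (rule eq_matI)
    fix i j assume "i < dim_row (pmat Q * pmat P)" "j < dim_col (pmat Q * pmat P)"
    then have ij: "i < 2^length P" "j < 2^length P" using l by (simp_all add: pmat_def Let_def)
    show "(pmat P * pmat Q) $$ (i, j) = (pmat Q * pmat P) $$ (i, j)"
      using ij l MM_sign[of Q P i j] s by (simp add: pmat_mult_index)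
  qed (use l in \<open>simp_all add: pmat_def Let_def\<close>)
qed

lemma closure_comm:
  assumes X: "X \<in> carrier_mat d d" and S: "\<forall>M\<in>S. M \<in> carrier_mat d d \<and> X * M = M * X"
  and M: "M \<in> lie_closure d S"
  shows "M \<in> carrier_mat d d \<and> X * M = M * X"
  using M
proof induction
  case zero
  then show ?case using X by simp
next
  case (gen M)
  then show ?case using S by auto
next
  case (add A B)
  then have A: "A \<in> carrier_mat d d" and B: "B \<in> carrier_mat d d" and XA: "X * A = A * X" and XB: "X * B = B * X" by auto
  have "X * (A + B) = X * A + X * B" by (rule mult_add_distrib_mat[OF X A B])
  also have "\<dots> = (A + B) * X" using XA XB add_mult_distrib_mat[OF A B X] by simp
  finally show ?case using A B by simp
next
  case (smult A r)
  then have A: "A \<in> carrier_mat d d" and XA: "X * A = A * X" by auto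
  show ?case using mult_smult_distrib[OF X A] mult_smult_assoc_mat[OF A X] XA A by simp
next
  case (bracket A B)
  then have A: "A \<in> carrier_mat d d" and B: "B \<in> carrier_mat d d" and XA: "X * A = A * X" and XB: "X * B = B * X" by auto
  have "X * (A * B - B * A) = X * A * B - X * B * A"
    using A B X mult_minus_distrib_mat[OF X mult_carrier_mat[OF A B] mult_carrier_mat[OF B A]] by simp
  also have "\<dots> = A * (X * B) - B * (X * A)" using A B X XA XB by simp
  also have "\<dots> = A * B * X - B * A * X" using A B X XA XB by simp
  also have "\<dots> = (A * B - B * A) * X" using A B X minus_mult_distrib_mat[OF mult_carrier_mat[OF A B] mult_carrier_mat[OF B A] X] by simp
  finally show ?case using A B minus_carrier_mat[OF mult_carrier_mat[OF B A], of "A*B"] by simp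
qed

lemma smult_cancel: "k \<noteq> 0 \<Longrightarrow> k \<cdot>\<^sub>m A = k \<cdot>\<^sub>m B \<Longrightarrow> (A :: complex mat) = B"
proof -
  assume k: "k \<noteq> 0" and e: "k \<cdot>\<^sub>m A = k \<cdot>\<^sub>m B"
  have d: "dim_row A = dim_row B" "dim_col A = dim_col B"
    using arg_cong[OF e, of dim_row] arg_cong[OF e, of dim_col] by simp_all
  show ?thesis
  proof (rule eq_matI)
    fix i j assume "i < dim_row B" "j < dim_col B"
    then have "(k \<cdot>\<^sub>m A) $$ (i,j) = (k \<cdot>\<^sub>m B) $$ (i,j)" using e by simp
    then show "A $$ (i,j) = B $$ (i,j)" using k d \<open>i < dim_row B\<close> \<open>j < dim_col B\<close> by simp
  qed (use d in auto)
qed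

definition Rel :: "(pauli \<times> pauli) set \<Rightarrow> pauli \<Rightarrow> pauli \<Rightarrow> bool" where
  "Rel G p q = (\<forall>A B. (A, B) \<in> G \<longrightarrow> anti p A = anti q B)"

definition walks :: "(pauli \<Rightarrow> pauli \<Rightarrow> bool) \<Rightarrow> nat \<Rightarrow> pauli list set" where
  "walks R n = {P. length P = n \<and> (\<forall>j. Suc j < n \<longrightarrow> R (P!j) (P!Suc j))}"

lemma two_local_len[simp]: "length (two_local n A B j) = n"
  by (simp add: two_local_def)

lemma two_local_nth: "k < n \<Longrightarrow> two_local n A B j ! k = (if k = j then A else if k = Suc j then B else PI)"
  by (simp add: two_local_def)

lemma sg_PI[simp]: "sg a PI = 1" by (simp add: sg_def anti_def)

lemma prod_two_local:
  assumes "length P = n" "Suc j < n"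
  shows "(\<Prod>k<n. sg (P!k) (two_local n A B j ! k)) = sg (P!j) A * sg (P!Suc j) B"
proof -
  have "(\<Prod>k<n. sg (P!k) (two_local n A B j ! k)) = (\<Prod>k\<in>{j, Suc j}. sg (P!k) (two_local n A B j ! k))"
    using assms by (intro prod.mono_neutral_right) (auto simp: two_local_nth)
  also have "\<dots> = sg (P!j) A * sg (P!Suc j) B" using assms by (simp add: two_local_nth)
  finally show ?thesis .
qed

lemma sg_prod_one: "sg a A * sg b B = 1 \<longleftrightarrow> anti a A = anti b B"
  by (simp add: sg_def)

lemma St_char: "St n (lieG G n) = walks (Rel G) n"
proof -
  let ?T = "{two_local n A B j | A B j. (A, B) \<in> G \<and> Suc j < n}"
  let ?S = "(\<lambda>P. \<i> \<cdot>\<^sub>m pmat P) ` ?T"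
  have Tc: "\<And>Q. Q \<in> ?T \<Longrightarrow> length Q = n" by auto
  have key: "\<And>P. length P = n \<Longrightarrow>
     (\<forall>M \<in> lie_closure (2^n) ?S. pmat P * M = M * pmat P) \<longleftrightarrow> (\<forall>Q\<in>?T. pmat P * pmat Q = pmat Q * pmat P)"
  proof
    fix P :: "pauli list" assume l: "length P = n"
    have X: "pmat P \<in> carrier_mat (2^n) (2^n)" using pmat_carrier[of P] l by simp
    {
      assume h: "\<forall>M \<in> lie_closure (2^n) ?S. pmat P * M = M * pmat P"
      show "\<forall>Q\<in>?T. pmat P * pmat Q = pmat Q * pmat P"
      proof
        fix Q assume Q: "Q \<in> ?T"
        have QC: "pmat Q \<in> carrier_mat (2^n) (2^n)" using pmat_carrier[of Q] Tc[OF Q] by simp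
        have "\<i> \<cdot>\<^sub>m pmat Q \<in> lie_closure (2^n) ?S" using Q by (intro lie_closure.gen) blast
        then have "pmat P * (\<i> \<cdot>\<^sub>m pmat Q) = (\<i> \<cdot>\<^sub>m pmat Q) * pmat P" using h by blast
        then have "\<i> \<cdot>\<^sub>m (pmat P * pmat Q) = \<i> \<cdot>\<^sub>m (pmat Q * pmat P)"
          using X QC by (simp add: mult_smult_distrib mult_smult_assoc_mat)
        then show "pmat P * pmat Q = pmat Q * pmat P" by (rule smult_cancel[rotated]) simp
      qed
    }
    {
      assume h: "\<forall>Q\<in>?T. pmat P * pmat Q = pmat Q * pmat P"
      have S: "\<forall>M\<in>?S. M \<in> carrier_mat (2^n) (2^n) \<and> pmat P * M = M * pmat P"
      proof
        fix M assume "M \<in> ?S"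
        then obtain Q where Q: "Q \<in> ?T" and M: "M = \<i> \<cdot>\<^sub>m pmat Q" by blast
        have QC: "pmat Q \<in> carrier_mat (2^n) (2^n)" using pmat_carrier[of Q] Tc[OF Q] by simp
        show "M \<in> carrier_mat (2^n) (2^n) \<and> pmat P * M = M * pmat P"
          using X QC h Q by (simp add: M mult_smult_distrib mult_smult_assoc_mat)
      qed
      show "\<forall>M \<in> lie_closure (2^n) ?S. pmat P * M = M * pmat P"
        using closure_comm[OF X S] by blast
    }
  qed
  have key2: "\<And>P. length P = n \<Longrightarrow> (\<forall>Q\<in>?T. pmat P * pmat Q = pmat Q * pmat P) \<longleftrightarrow>
      (\<forall>j. Suc j < n \<longrightarrow> Rel G (P!j) (P!Suc j))"
  proof -
    fix P :: "pauli list" assume l: "length P = n"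
    have "(\<forall>Q\<in>?T. pmat P * pmat Q = pmat Q * pmat P) \<longleftrightarrow>
       (\<forall>A B j. (A, B) \<in> G \<and> Suc j < n \<longrightarrow> pmat P * pmat (two_local n A B j) = pmat (two_local n A B j) * pmat P)"
      by blast
    also have "\<dots> \<longleftrightarrow> (\<forall>A B j. (A, B) \<in> G \<and> Suc j < n \<longrightarrow> anti (P!j) A = anti (P!Suc j) B)"
      using l by (simp add: comm_iff prod_two_local sg_prod_one)
    finally show "?thesis P" by (auto simp: Rel_def)
  qed
  show ?thesis
    unfolding St_def lieG_def Lie_def walks_def pauli_strings_def
    using key key2 by auto
qed

lemma Rel_insert[simp]: "Rel (insert (A,B) G) p q = (anti p A = anti q B \<and> Rel G p q)"
  by (auto simp: Rel_def)

lemma Rel_empty[simp]: "Rel {} p q" by (simp add: Rel_def)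

lemma pauli_UNIV: "(UNIV :: pauli set) = {PI, PX, PY, PZ}"
proof (rule Set.set_eqI)
  fix x :: pauli show "x \<in> UNIV \<longleftrightarrow> x \<in> {PI, PX, PY, PZ}" by (cases x) simp_all
qed

lemma pset: "{p. R p h} = (if R PI h then {PI} else {}) \<union> (if R PX h then {PX} else {}) \<union>
   (if R PY h then {PY} else {}) \<union> (if R PZ h then {PZ} else {})"
proof (rule Set.set_eqI)
  fix x :: pauli show "x \<in> {p. R p h} \<longleftrightarrow> x \<in> (if R PI h then {PI} else {}) \<union> (if R PX h then {PX} else {}) \<union>
   (if R PY h then {PY} else {}) \<union> (if R PZ h then {PZ} else {})" by (cases x) simp_all
qed

lemma walks_1: "walks R (Suc 0) = (\<lambda>p. [p]) ` {PI, PX, PY, PZ}"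
proof -
  have "walks R (Suc 0) = (\<lambda>p. [p]) ` UNIV"
    by (auto simp: walks_def length_Suc_conv)
  then show ?thesis by (simp add: pauli_UNIV)
qed

lemma walks_Suc: "walks R (Suc (Suc n)) = (\<Union>w\<in>walks R (Suc n). (\<lambda>p. p # w) ` {p. R p (hd w)})"
proof (intro equalityI subsetI)
  fix P assume "P \<in> walks R (Suc (Suc n))"
  then have l: "length P = Suc (Suc n)" and h: "\<forall>j. Suc j < Suc (Suc n) \<longrightarrow> R (P!j) (P!Suc j)"
    by (auto simp: walks_def)
  then obtain p w where P: "P = p # w" and lw: "length w = Suc n" by (cases P) auto
  have "w \<in> walks R (Suc n)" unfolding walks_def using lw h P by auto
  moreover have "R p (hd w)" using h[rule_format, of 0] P lw by (cases w) auto
  ultimately show "P \<in> (\<Union>w\<in>walks R (Suc n). (\<lambda>p. p # w) ` {p. R p (hd w)})" using P by blast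
next
  fix P assume "P \<in> (\<Union>w\<in>walks R (Suc n). (\<lambda>p. p # w) ` {p. R p (hd w)})"
  then obtain p w where P: "P = p # w" and w: "w \<in> walks R (Suc n)" and r: "R p (hd w)" by blast
  from w have lw: "length w = Suc n" and h: "\<forall>j. Suc j < Suc n \<longrightarrow> R (w!j) (w!Suc j)"
    by (auto simp: walks_def)
  show "P \<in> walks R (Suc (Suc n))"
    unfolding walks_def
  proof (intro CollectI conjI allI impI)
    show "length P = Suc (Suc n)" using P lw by simp
    fix j assume j: "Suc j < Suc (Suc n)"
    show "R (P!j) (P!Suc j)"
    proof (cases j)
      case 0 then show ?thesis using P r lw by (cases w) auto
    next
      case (Suc k) then show ?thesis using P h j by auto
    qed
  qed
qed

lemma walks_ind:
  assumes base: "walks R 3 = A 3"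
  and step: "\<And>m. A (Suc (Suc (Suc (Suc m)))) = (\<Union>w\<in>A (Suc (Suc (Suc m))). (\<lambda>p. p # w) ` {p. R p (hd w)})"
  and n: "3 \<le> n"
  shows "walks R n = A n"
proof -
  have h: "walks R (Suc (Suc (Suc m))) = A (Suc (Suc (Suc m)))" for m
  proof (induction m)
    case 0 then show ?case using base by (simp add: numeral_3_eq_3)
  next
    case (Suc m)
    show ?case
      unfolding walks_Suc[of R "Suc (Suc m)"] Suc.IH step[of m] ..
  qed
  have e: "n = Suc (Suc (Suc (n - 3)))" using n by arith
  show ?thesis using h[of "n - 3", unfolded e[symmetric]] .
qed

lemma walks_3: "walks R 3 = (\<Union>w\<in>(\<Union>w\<in>(\<lambda>p. [p]) ` {PI, PX, PY, PZ}. (\<lambda>p. p # w) ` {p. R p (hd w)}). (\<lambda>p. p # w) ` {p. R p (hd w)})"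
  by (simp add: numeral_3_eq_3 walks_Suc walks_1)

lemma rot_nth: "w \<noteq> [] \<Longrightarrow> rotate1 w ! (k mod length w) = w ! (Suc k mod length w)"
proof (cases w)
  case (Cons a list)
  let ?L = "Suc (length list)"
  have lt: "k mod ?L < ?L" by simp
  show ?thesis
  proof (cases "k mod ?L < length list")
    case True
    then have "Suc k mod ?L = Suc (k mod ?L)" by (simp add: mod_Suc)
    then show ?thesis using True Cons by (simp add: nth_append)
  next
    case False
    then have e: "k mod ?L = length list" using lt by linarith
    then have "Suc k mod ?L = 0" by (simp add: mod_Suc)
    then show ?thesis using e Cons by (simp add: nth_append)
  qed
qed simp

lemma per_Suc: "w \<noteq> [] \<Longrightarrow> per w (Suc n) = hd w # per (rotate1 w) n"
proof -
  assume w: "w \<noteq> []"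
  have "per w (Suc n) = map (\<lambda>k. w ! (k mod length w)) (0 # map Suc [0..<n])"
    unfolding per_def by (simp only: upt_conv_Cons zero_less_Suc map_Suc_upt)
  also have "\<dots> = hd w # map (\<lambda>k. rotate1 w ! (k mod length (rotate1 w))) [0..<n]"
    using w by (simp add: rot_nth hd_conv_nth)
  finally show ?thesis by (simp add: per_def)
qed

lemma per_0[simp]: "per w 0 = []" by (simp add: per_def)



lemma per_single[simp]: "per [a] n = replicate n a"
  by (simp add: per_def map_replicate_const)
lemmas ev = per_Suc numeral_3_eq_3 anti_def

lemma case_a2: "3 \<le> n \<Longrightarrow> walks (Rel a2) n = {per [PI] n, per [PX,PY] n, per [PY,PX] n, per [PZ] n}"
  apply (rule walks_ind[where A="\<lambda>n. {per [PI] n, per [PX,PY] n, per [PY,PX] n, per [PZ] n}"])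
  subgoal by (simp only: walks_3 pset) (simp add: a2_def ev; (auto)?)
  subgoal by (simp only: pset) (simp add: a2_def ev; (auto)?)
  by assumption

lemma case_a3: "3 \<le> n \<Longrightarrow> walks (Rel a3) n = {per [PI] n, per [PX] n, per [PY,PZ] n, per [PZ,PY] n}"
  apply (rule walks_ind[where A="\<lambda>n. {per [PI] n, per [PX] n, per [PY,PZ] n, per [PZ,PY] n}"])
  subgoal by (simp only: walks_3 pset) (simp add: a3_def ev; (auto)?)
  subgoal by (simp only: pset) (simp add: a3_def ev; (auto)?)
  by assumption

lemma case_a6: "3 \<le> n \<Longrightarrow> walks (Rel a6) n = {per [PI] n, per [PX] n, per [PY,PZ] n, per [PZ,PY] n}"
  apply (rule walks_ind[where A="\<lambda>n. {per [PI] n, per [PX] n, per [PY,PZ] n, per [PZ,PY] n}"])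
  subgoal by (simp only: walks_3 pset) (simp add: a6_def ev; (auto)?)
  subgoal by (simp only: pset) (simp add: a6_def ev; (auto)?)
  by assumption

lemma case_a4: "3 \<le> n \<Longrightarrow> walks (Rel a4) n = {per [PI] n, per [PX] n, per [PY] n, per [PZ] n}"
  apply (rule walks_ind[where A="\<lambda>n. {per [PI] n, per [PX] n, per [PY] n, per [PZ] n}"])
  subgoal by (simp only: walks_3 pset) (simp add: a4_def ev; (auto)?)
  subgoal by (simp only: pset) (simp add: a4_def ev; (auto)?)
  by assumption

lemma case_a7: "3 \<le> n \<Longrightarrow> walks (Rel a7) n = {per [PI] n, per [PX] n, per [PY] n, per [PZ] n}"
  apply (rule walks_ind[where A="\<lambda>n. {per [PI] n, per [PX] n, per [PY] n, per [PZ] n}"])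
  subgoal by (simp only: walks_3 pset) (simp add: a7_def ev; (auto)?)
  subgoal by (simp only: pset) (simp add: a7_def ev; (auto)?)
  by assumption

lemma case_a5: "3 \<le> n \<Longrightarrow> walks (Rel a5) n = {per [PI] n, per [PX,PY,PZ] n, per [PY,PZ,PX] n, per [PZ,PX,PY] n}"
  apply (rule walks_ind[where A="\<lambda>n. {per [PI] n, per [PX,PY,PZ] n, per [PY,PZ,PX] n, per [PZ,PX,PY] n}"])
  subgoal by (simp only: walks_3 pset) (simp add: a5_def ev; (auto)?)
  subgoal by (simp only: pset) (simp add: a5_def ev; (auto)?)
  by assumption

lemma case_a10: "3 \<le> n \<Longrightarrow> walks (Rel a10) n = {per [PI] n, per [PX,PY,PZ] n, per [PY,PZ,PX] n, per [PZ,PX,PY] n}"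
  apply (rule walks_ind[where A="\<lambda>n. {per [PI] n, per [PX,PY,PZ] n, per [PY,PZ,PX] n, per [PZ,PX,PY] n}"])
  subgoal by (simp only: walks_3 pset) (simp add: a10_def ev; (auto)?)
  subgoal by (simp only: pset) (simp add: a10_def ev; (auto)?)
  by assumption

lemma case_a8: "3 \<le> n \<Longrightarrow> walks (Rel a8) n = {per [PI] n, per [PY] n, PX # replicate (n - 1) PI, PZ # replicate (n - 1) PY}"
  apply (rule walks_ind[where A="\<lambda>n. {per [PI] n, per [PY] n, PX # replicate (n - 1) PI, PZ # replicate (n - 1) PY}"])
  subgoal by (simp only: walks_3 pset) (simp add: a8_def ev; (auto)?)
  subgoal by (simp only: pset) (simp add: a8_def ev; (auto)?)
  by assumption

lemma case_a9: "3 \<le> n \<Longrightarrow> walks (Rel a9) n = {per [PI] n, PX # replicate (n - 1) PI, PY # PX # replicate (n - 2) PI, PZ # PX # replicate (n - 2) PI}"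
  apply (rule walks_ind[where A="\<lambda>n. {per [PI] n, PX # replicate (n - 1) PI, PY # PX # replicate (n - 2) PI, PZ # PX # replicate (n - 2) PI}"])
  subgoal by (simp only: walks_3 pset) (simp add: a9_def ev; (auto)?)
  subgoal by (simp only: pset) (simp add: a9_def ev; (auto)?)
  by assumption

lemma case_a13: "3 \<le> n \<Longrightarrow> walks (Rel a13) n = {per [PI] n, per [PX] n}"
  apply (rule walks_ind[where A="\<lambda>n. {per [PI] n, per [PX] n}"])
  subgoal by (simp only: walks_3 pset) (simp add: a13_def ev; (auto)?)
  subgoal by (simp only: pset) (simp add: a13_def ev; (auto)?)
  by assumption

lemma case_a20: "3 \<le> n \<Longrightarrow> walks (Rel a20) n = {per [PI] n, per [PX] n}"
  apply (rule walks_ind[where A="\<lambda>n. {per [PI] n, per [PX] n}"])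
  subgoal by (simp only: walks_3 pset) (simp add: a20_def ev; (auto)?)
  subgoal by (simp only: pset) (simp add: a20_def ev; (auto)?)
  by assumption

lemma case_a14: "3 \<le> n \<Longrightarrow> walks (Rel a14) n = {per [PI] n, per [PZ] n}"
  apply (rule walks_ind[where A="\<lambda>n. {per [PI] n, per [PZ] n}"])
  subgoal by (simp only: walks_3 pset) (simp add: a14_def ev; (auto)?)
  subgoal by (simp only: pset) (simp add: a14_def ev; (auto)?)
  by assumption

lemma case_a15: "3 \<le> n \<Longrightarrow> walks (Rel a15) n = {per [PI] n, PX # replicate (n - 1) PI}"
  apply (rule walks_ind[where A="\<lambda>n. {per [PI] n, PX # replicate (n - 1) PI}"])
  subgoal by (simp only: walks_3 pset) (simp add: a15_def ev; (auto)?)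
  subgoal by (simp only: pset) (simp add: a15_def ev; (auto)?)
  by assumption

lemma case_b2: "3 \<le> n \<Longrightarrow> walks (Rel b2) n = {per [PI] n, PX # replicate (n - 1) PI}"
  apply (rule walks_ind[where A="\<lambda>n. {per [PI] n, PX # replicate (n - 1) PI}"])
  subgoal by (simp only: walks_3 pset) (simp add: b2_def ev; (auto)?)
  subgoal by (simp only: pset) (simp add: b2_def ev; (auto)?)
  by assumption

lemma case_b4: "3 \<le> n \<Longrightarrow> walks (Rel b4) n = {per [PI] n, PX # replicate (n - 1) PI}"
  apply (rule walks_ind[where A="\<lambda>n. {per [PI] n, PX # replicate (n - 1) PI}"])
  subgoal by (simp only: walks_3 pset) (simp add: b4_def ev; (auto)?)
  subgoal by (simp only: pset) (simp add: b4_def ev; (auto)?)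
  by assumption

lemma case_a11: "3 \<le> n \<Longrightarrow> walks (Rel a11) n = {per [PI] n}"
  apply (rule walks_ind[where A="\<lambda>n. {per [PI] n}"])
  subgoal by (simp only: walks_3 pset) (simp add: a11_def ev; (auto)?)
  subgoal by (simp only: pset) (simp add: a11_def ev; (auto)?)
  by assumption

lemma case_a12: "3 \<le> n \<Longrightarrow> walks (Rel a12) n = {per [PI] n}"
  apply (rule walks_ind[where A="\<lambda>n. {per [PI] n}"])
  subgoal by (simp only: walks_3 pset) (simp add: a12_def ev; (auto)?)
  subgoal by (simp only: pset) (simp add: a12_def ev; (auto)?)
  by assumption

lemma case_a16: "3 \<le> n \<Longrightarrow> walks (Rel a16) n = {per [PI] n}"
  apply (rule walks_ind[where A="\<lambda>n. {per [PI] n}"])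
  subgoal by (simp only: walks_3 pset) (simp add: a16_def ev; (auto)?)
  subgoal by (simp only: pset) (simp add: a16_def ev; (auto)?)
  by assumption

lemma case_a17: "3 \<le> n \<Longrightarrow> walks (Rel a17) n = {per [PI] n}"
  apply (rule walks_ind[where A="\<lambda>n. {per [PI] n}"])
  subgoal by (simp only: walks_3 pset) (simp add: a17_def ev; (auto)?)
  subgoal by (simp only: pset) (simp add: a17_def ev; (auto)?)
  by assumption

lemma case_a18: "3 \<le> n \<Longrightarrow> walks (Rel a18) n = {per [PI] n}"
  apply (rule walks_ind[where A="\<lambda>n. {per [PI] n}"])
  subgoal by (simp only: walks_3 pset) (simp add: a18_def ev; (auto)?)
  subgoal by (simp only: pset) (simp add: a18_def ev; (auto)?)
  by assumption

lemma case_a19: "3 \<le> n \<Longrightarrow> walks (Rel a19) n = {per [PI] n}"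
  apply (rule walks_ind[where A="\<lambda>n. {per [PI] n}"])
  subgoal by (simp only: walks_3 pset) (simp add: a19_def ev; (auto)?)
  subgoal by (simp only: pset) (simp add: a19_def ev; (auto)?)
  by assumption

lemma case_a21: "3 \<le> n \<Longrightarrow> walks (Rel a21) n = {per [PI] n}"
  apply (rule walks_ind[where A="\<lambda>n. {per [PI] n}"])
  subgoal by (simp only: walks_3 pset) (simp add: a21_def ev; (auto)?)
  subgoal by (simp only: pset) (simp add: a21_def ev; (auto)?)
  by assumption

lemma case_a22: "3 \<le> n \<Longrightarrow> walks (Rel a22) n = {per [PI] n}"
  apply (rule walks_ind[where A="\<lambda>n. {per [PI] n}"])
  subgoal by (simp only: walks_3 pset) (simp add: a22_def ev; (auto)?)
  subgoal by (simp only: pset) (simp add: a22_def ev; (auto)?)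
  by assumption

lemma case_b3: "3 \<le> n \<Longrightarrow> walks (Rel b3) n = {per [PI] n}"
  apply (rule walks_ind[where A="\<lambda>n. {per [PI] n}"])
  subgoal by (simp only: walks_3 pset) (simp add: b3_def ev; (auto)?)
  subgoal by (simp only: pset) (simp add: b3_def ev; (auto)?)
  by assumption


lemma chain_const: "(\<forall>j. Suc j < n \<longrightarrow> f (P!j) = f (P!Suc j)) \<Longrightarrow> k < n \<Longrightarrow> f (P!k) = (f (P!0) :: bool)"
  by (induction k) auto

lemma walks_eqclass:
  assumes R: "\<And>p q. R p q \<longleftrightarrow> (h p \<longleftrightarrow> h q)"
  shows "walks R n = {P. length P = n \<and> ((\<forall>x\<in>set P. h x) \<or> (\<forall>x\<in>set P. \<not> h x))}"
proof (intro equalityI subsetI)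
  fix P assume "P \<in> walks R n"
  then have l: "length P = n" and c: "\<forall>j. Suc j < n \<longrightarrow> h (P!j) = h (P!Suc j)"
    by (auto simp: walks_def R)
  have all: "\<forall>k<n. h (P!k) = h (P!0)" using chain_const[OF c] by blast
  show "P \<in> {P. length P = n \<and> ((\<forall>x\<in>set P. h x) \<or> (\<forall>x\<in>set P. \<not> h x))}"
  proof (cases "h (P!0)")
    case True then show ?thesis using all l by (auto simp: in_set_conv_nth)
  next
    case False then show ?thesis using all l by (auto simp: in_set_conv_nth)
  qed
next
  fix P assume "P \<in> {P. length P = n \<and> ((\<forall>x\<in>set P. h x) \<or> (\<forall>x\<in>set P. \<not> h x))}"
  then have l: "length P = n" and d: "(\<forall>x\<in>set P. h x) \<or> (\<forall>x\<in>set P. \<not> h x)" by auto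
  show "P \<in> walks R n"
    unfolding walks_def R using l d by (auto simp: nth_mem)
qed

lemma walks_both:
  assumes R: "\<And>p q. R p q \<longleftrightarrow> (g p \<and> g q)" and n: "2 \<le> n"
  shows "walks R n = {P. length P = n \<and> (\<forall>x\<in>set P. g x)}"
proof (intro equalityI subsetI)
  fix P assume "P \<in> walks R n"
  then have l: "length P = n" and c: "\<forall>j. Suc j < n \<longrightarrow> g (P!j) \<and> g (P!Suc j)"
    by (auto simp: walks_def R)
  have "\<forall>k<n. g (P!k)"
  proof (intro allI impI)
    fix k assume k: "k < n"
    show "g (P!k)"
    proof (cases "Suc k < n")
      case True then show ?thesis using c by blast
    next
      case False
      then have "Suc (k - 1) < n" "k = Suc (k - 1)" using k n by arith+
      then show ?thesis using c by metis
    qed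
  qed
  then show "P \<in> {P. length P = n \<and> (\<forall>x\<in>set P. g x)}" using l by (auto simp: in_set_conv_nth)
next
  fix P assume "P \<in> {P. length P = n \<and> (\<forall>x\<in>set P. g x)}"
  then show "P \<in> walks R n" unfolding walks_def R by (auto simp: nth_mem)
qed

lemma pauli_cases: "(\<forall>x. P x) \<longleftrightarrow> P PI \<and> P PX \<and> P PY \<and> P PZ"
  by (metis pauli.exhaust)

lemma case_a0: "walks (Rel a0) n = tens_set {PI, PX} n \<union> tens_set {PY, PZ} n"
proof -
  have "walks (Rel a0) n = {P. length P = n \<and> ((\<forall>x\<in>set P. x \<in> {PY,PZ}) \<or> (\<forall>x\<in>set P. x \<notin> {PY,PZ}))}"
  proof (rule walks_eqclass)
    fix p q show "Rel a0 p q \<longleftrightarrow> (p \<in> {PY,PZ} \<longleftrightarrow> q \<in> {PY,PZ})"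
      by (cases p; cases q; simp add: a0_def anti_def)
  qed
  also have "\<dots> = tens_set {PI, PX} n \<union> tens_set {PY, PZ} n"
  proof (intro equalityI subsetI)
    fix P assume "P \<in> {P. length P = n \<and> ((\<forall>x\<in>set P. x \<in> {PY,PZ}) \<or> (\<forall>x\<in>set P. x \<notin> {PY,PZ}))}"
    moreover have "\<And>x::pauli. x \<notin> {PY,PZ} \<Longrightarrow> x \<in> {PI,PX}" by (case_tac x) auto
    ultimately show "P \<in> tens_set {PI, PX} n \<union> tens_set {PY, PZ} n"
      unfolding tens_set_def by blast
  next
    fix P assume "P \<in> tens_set {PI, PX} n \<union> tens_set {PY, PZ} n"
    then show "P \<in> {P. length P = n \<and> ((\<forall>x\<in>set P. x \<in> {PY,PZ}) \<or> (\<forall>x\<in>set P. x \<notin> {PY,PZ}))}"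
      unfolding tens_set_def by auto
  qed
  finally show ?thesis .
qed

lemma tens_IX: "2 \<le> n \<Longrightarrow> (\<And>p q. R p q \<longleftrightarrow> (p \<in> {PI,PX} \<and> q \<in> {PI,PX})) \<Longrightarrow> walks R n = tens_set {PI, PX} n"
  by (subst walks_both[where g="\<lambda>p. p \<in> {PI,PX}"]) (auto simp: tens_set_def)

lemma case_b0: "2 \<le> n \<Longrightarrow> walks (Rel b0) n = tens_set {PI, PX} n"
  apply (rule tens_IX, assumption)
  subgoal for p q by (cases p; cases q; simp add: b0_def anti_def)
  done

lemma case_b1: "2 \<le> n \<Longrightarrow> walks (Rel b1) n = tens_set {PI, PX} n"
  apply (rule tens_IX, assumption)
  subgoal for p q by (cases p; cases q; simp add: b1_def anti_def)
  done


theorem mainTheorem8: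
  fixes n :: nat
  assumes "n \<ge> 3"
  shows
   "St n (lieG a0 n) = tens_set {PI, PX} n \<union> tens_set {PY, PZ} n \<and>
    St n (lieG a2 n) = {per [PI] n, per [PX,PY] n, per [PY,PX] n, per [PZ] n} \<and>
    St n (lieG a3 n) = {per [PI] n, per [PX] n, per [PY,PZ] n, per [PZ,PY] n} \<and>
    St n (lieG a6 n) = {per [PI] n, per [PX] n, per [PY,PZ] n, per [PZ,PY] n} \<and>
    St n (lieG a4 n) = {per [PI] n, per [PX] n, per [PY] n, per [PZ] n} \<and>
    St n (lieG a7 n) = {per [PI] n, per [PX] n, per [PY] n, per [PZ] n} \<and>
    St n (lieG a5 n) = {per [PI] n, per [PX,PY,PZ] n, per [PY,PZ,PX] n, per [PZ,PX,PY] n} \<and>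
    St n (lieG a10 n) = {per [PI] n, per [PX,PY,PZ] n, per [PY,PZ,PX] n, per [PZ,PX,PY] n} \<and>
    St n (lieG a8 n) = {per [PI] n, per [PY] n, PX # replicate (n - 1) PI, PZ # replicate (n - 1) PY} \<and>
    St n (lieG a9 n) = {per [PI] n, PX # replicate (n - 1) PI, PY # PX # replicate (n - 2) PI,
                        PZ # PX # replicate (n - 2) PI} \<and>
    St n (lieG a13 n) = {per [PI] n, per [PX] n} \<and>
    St n (lieG a20 n) = {per [PI] n, per [PX] n} \<and>
    St n (lieG a14 n) = {per [PI] n, per [PZ] n} \<and>
    St n (lieG a15 n) = {per [PI] n, PX # replicate (n - 1) PI} \<and>
    St n (lieG b2 n) = {per [PI] n, PX # replicate (n - 1) PI} \<and>
    St n (lieG b4 n) = {per [PI] n, PX # replicate (n - 1) PI} \<and>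
    St n (lieG b0 n) = tens_set {PI, PX} n \<and>
    St n (lieG b1 n) = tens_set {PI, PX} n \<and>
    (\<forall>G \<in> {a11, a12, a16, a17, a18, a19, a21, a22, b3}. St n (lieG G n) = {per [PI] n})"
    using assms by (simp add: St_char case_a0 case_a2 case_a3 case_a6 case_a4 case_a7 case_a5 case_a10 case_a8 case_a9 case_a13 case_a20 case_a14 case_a15 case_b2 case_b4 case_b0 case_b1 case_a11 case_a12 case_a16 case_a17 case_a18 case_a19 case_a21 case_a22 case_b3)

end
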